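(* For positive integers $p,q,r,s$, the transition maps satisfy: (1) $T^{p,q}_{r,s}:\Lambda^{p,q}\to\Lambda^{r,s}$ is well-defined; (2) $T^{p,q}_{r,s}$ is order-preserving; (3) $T^{r,s}_{p,q}\circ T^{p,q}_{r,s}\le\mathrm{id}_{\Lambda^{p,q}}$ (pointwise); (4) $T^{r,s}_{p,q}\circ T^{p,q}_{r,s}=\mathrm{id}_{\Lambda^{p,q}}$ if $p\le r$ and $q\le s$; (5) $(T^{p,q}_{r,s})^{-1}(0)=\{0\}$ if $p,q,r,s\ge 2$.
   Context: $\mathbb{N}=\{0,1,2,\dots\}$. For positive integers $p,q$, $\Lambda^{p,q}=\langle a,b\mid pa=qb\rangle$ is the quotient of the free commutative monoid $\mathbb{N}a\oplus\mathbb{N}b$ by the congruence generated by $\lambda+pa\sim\lambda+qb$; it is ordered by $\lambda\le\mu$ iff $\lambda+\nu=\mu$ for some $\nu\in\Lambda^{p,q}$. The transition function $\tau^p_q:\mathbb{N}\to\mathbb{N}$ is $\tau^p_q(mp+n)=mq+\min\{n,q-1\}$ ($m\in\mathbb{N}$, $0\le n<p$). The transition map $T^{p,q}_{r,s}:\Lambda^{p,q}\to\Lambda^{r,s}$ is defined by $T^{p,q}_{r,s}(ma+nb)=\tau^p_r(m)a+\tau^q_s(n)b$ for $m,n\in\mathbb{N}$. For maps $f,g$ into a poset, $f\le g$ means $f(x)\le g(x)$ for all $x$. *)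

theory Defs
  imports Main
begin

text \<open>Elements of the free commutative monoid N a + N b are represented by pairs
  (m, n) standing for m a + n b.\<close>

definition padd :: "nat \<times> nat \<Rightarrow> nat \<times> nat \<Rightarrow> nat \<times> nat" where
  "padd x y = (fst x + fst y, snd x + snd y)"

text \<open>Lambda^{p,q} is the quotient by this relation.\<close>

inductive lcong :: "nat \<Rightarrow> nat \<Rightarrow> nat \<times> nat \<Rightarrow> nat \<times> nat \<Rightarrow> bool"
  for p q :: nat where
  gen: "lcong p q (padd l (p, 0)) (padd l (0, q))"
| refl: "lcong p q x x"
| sym: "lcong p q x y \<Longrightarrow> lcong p q y x"
| trans: "lcong p q x y \<Longrightarrow> lcong p q y z \<Longrightarrow> lcong p q x z"
| add: "lcong p q x y \<Longrightarrow> lcong p q (padd x z) (padd y z)"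

definition lle :: "nat \<Rightarrow> nat \<Rightarrow> nat \<times> nat \<Rightarrow> nat \<times> nat \<Rightarrow> bool" where
  "lle p q x y \<longleftrightarrow> (\<exists>z. lcong p q (padd x z) y)"

definition tau :: "nat \<Rightarrow> nat \<Rightarrow> nat \<Rightarrow> nat" where
  "tau p q k = (k div p) * q + min (k mod p) (q - 1)"

definition trans_map :: "nat \<Rightarrow> nat \<Rightarrow> nat \<Rightarrow> nat \<Rightarrow> nat \<times> nat \<Rightarrow> nat \<times> nat" where
  "trans_map p q r s x = (tau p r (fst x), tau q s (snd x))"

end

theory Submission
  imports Defs
begin

definition nf :: "nat \<Rightarrow> nat \<Rightarrow> nat \<times> nat \<Rightarrow> nat \<times> nat" where
  "nf p q x = (fst x mod p, snd x + (fst x div p) * q)"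

lemma nf_padd: "0 < p \<Longrightarrow> nf p q (padd x z) = nf p q (padd (nf p q x) z)"
proof -
  assume p: "0 < p"
  obtain m n where x: "x = (m, n)" by force
  obtain a b where z: "z = (a, b)" by force
  have d: "(m + a) div p = m div p + (m mod p + a) div p"
  proof -
    have "m + a = (m mod p + a) + (m div p) * p" by simp
    hence "(m + a) div p = ((m mod p + a) + (m div p) * p) div p" by simp
    also have "\<dots> = m div p + (m mod p + a) div p"
      using div_mult_self1[of p "m mod p + a" "m div p"] p by simp
    finally show ?thesis .
  qed
  have "(m + a) mod p = (m mod p + a) mod p" by (simp add: mod_add_left_eq)
  then show ?thesis using d by (simp add: nf_def padd_def x z algebra_simps)
qed

lemma lcong_nf: "lcong p q x y \<Longrightarrow> 0 < p \<Longrightarrow> nf p q x = nf p q y"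
proof (induction rule: lcong.induct)
  case (gen l)
  obtain a b where "l = (a, b)" by force
  then show ?case using gen by (simp add: nf_def padd_def algebra_simps div_add_self2)
next
  case (add x y z)
  then show ?case by (metis nf_padd)
qed auto

lemma lcong_step: "lcong p q (m + k*p, n) (m, n + k*q)"
proof (induction k arbitrary: n)
  case 0 then show ?case by (simp add: lcong.refl)
next
  case (Suc k)
  have "lcong p q (padd (m + k*p, n) (p,0)) (padd (m + k*p, n) (0,q))" by (rule lcong.gen)
  hence "lcong p q (m + Suc k * p, n) (m + k*p, n + q)" by (simp add: padd_def algebra_simps)
  moreover have "lcong p q (m + k*p, n + q) (m, n + q + k*q)" by (rule Suc)
  ultimately show ?case by (metis lcong.trans add.assoc mult_Suc)
qed

lemma lcong_to_nf: "lcong p q x (nf p q x)"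
proof -
  obtain m n where x: "x = (m, n)" by force
  have "lcong p q (m mod p + (m div p)*p, n) (m mod p, n + (m div p)*q)" by (rule lcong_step)
  then show ?thesis by (simp add: x nf_def)
qed

lemma lcong_iff: "0 < p \<Longrightarrow> lcong p q x y \<longleftrightarrow> nf p q x = nf p q y"
  by (metis lcong_nf lcong_to_nf lcong.sym lcong.trans)

lemma tau_mod: "0 < r \<Longrightarrow> tau p r k mod r = min (k mod p) (r - 1)"
  unfolding tau_def by (simp add: mod_add_left_eq)

lemma tau_div: "0 < r \<Longrightarrow> tau p r k div r = k div p"
  unfolding tau_def by simp

lemma tau_addmult: "0 < q \<Longrightarrow> tau q s (n + k*q) = tau q s n + k*s"
  unfolding tau_def by (simp add: algebra_simps)

lemma nf_T: "0 < p \<Longrightarrow> 0 < q \<Longrightarrow> 0 < r \<Longrightarrow>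
  nf r s (trans_map p q r s x) = (min (fst (nf p q x)) (r - 1), tau q s (snd (nf p q x)))"
  by (simp add: nf_def trans_map_def tau_mod tau_div tau_addmult)

lemma tau_mono: "0 < p \<Longrightarrow> 0 < r \<Longrightarrow> a \<le> b \<Longrightarrow> tau p r a \<le> tau p r b"
proof -
  assume p: "0 < p" and r: "0 < r" and ab: "a \<le> b"
  have "a div p \<le> b div p" using ab by (simp add: div_le_mono)
  then consider "a div p = b div p" | "a div p < b div p" by linarith
  then show ?thesis
  proof cases
    case 1
    have "a mod p \<le> b mod p" using ab 1
      by (metis add_le_cancel_left div_mult_mod_eq)
    then show ?thesis using 1 by (simp add: tau_def)
  next
    case 2
    hence "a div p + 1 \<le> b div p" by simp
    hence "(a div p + 1) * r \<le> (b div p) * r" by (rule mult_right_mono) simp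
    then show ?thesis unfolding tau_def by (simp add: algebra_simps)
  qed
qed

lemma tau_back: "0 < p \<Longrightarrow> 0 < r \<Longrightarrow> tau r p (tau p r m) \<le> m"
proof -
  assume p: "0 < p" and r: "0 < r"
  have "tau r p (tau p r m) = (m div p) * p + min (min (m mod p) (r - 1)) (p - 1)"
    using tau_mod[OF r, of p m] tau_div[OF r, of p m] unfolding tau_def[of r p] by simp
  also have "\<dots> \<le> (m div p) * p + m mod p" by (rule add_left_mono) (simp add: min.coboundedI1)
  also have "\<dots> = m" by simp
  finally show ?thesis .
qed

lemma tau_back_eq: "0 < p \<Longrightarrow> p \<le> r \<Longrightarrow> tau r p (tau p r m) = m"
proof -
  assume p: "0 < p" and pr: "p \<le> r"
  have r: "0 < r" using p pr by simp
  have "m mod p < p" using p by simp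
  have "tau r p (tau p r m) = (m div p) * p + min (min (m mod p) (r - 1)) (p - 1)"
    using tau_mod[OF r, of p m] tau_div[OF r, of p m] unfolding tau_def[of r p] by simp
  also have "\<dots> = (m div p) * p + m mod p" using \<open>m mod p < p\<close> pr by simp
  finally show ?thesis by simp
qed

lemma tau_zero: "0 < p \<Longrightarrow> 2 \<le> r \<Longrightarrow> tau p r m = 0 \<longleftrightarrow> m = 0"
proof
  assume p: "0 < p" and r: "2 \<le> r" and t: "tau p r m = 0"
  hence "m div p = 0" "min (m mod p) (r - 1) = 0" by (auto simp: tau_def)
  moreover have "m mod p = 0" using \<open>min (m mod p) (r - 1) = 0\<close> r by (simp add: min_def split: if_splits)
  ultimately show "m = 0" by (metis div_mult_mod_eq mult_0 add_0)
qed (simp add: tau_def)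

theorem proposition2p4:
  fixes p q r s :: nat
  assumes "0 < p" and "0 < q" and "0 < r" and "0 < s"
  shows "(\<forall>x y. lcong p q x y \<longrightarrow> lcong r s (trans_map p q r s x) (trans_map p q r s y))
    \<and> (\<forall>x y. lle p q x y \<longrightarrow> lle r s (trans_map p q r s x) (trans_map p q r s y))
    \<and> (\<forall>x. lle p q (trans_map r s p q (trans_map p q r s x)) x)
    \<and> (p \<le> r \<and> q \<le> s \<longrightarrow> (\<forall>x. lcong p q (trans_map r s p q (trans_map p q r s x)) x))
    \<and> (2 \<le> p \<and> 2 \<le> q \<and> 2 \<le> r \<and> 2 \<le> s \<longrightarrow>
         (\<forall>x. lcong r s (trans_map p q r s x) (0, 0) \<longleftrightarrow> lcong p q x (0, 0)))"
proof -
  note a = assms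
  have P1: "\<And>x y. lcong p q x y \<Longrightarrow> lcong r s (trans_map p q r s x) (trans_map p q r s y)"
    using a by (simp add: lcong_iff nf_T)
  have P2: "\<And>x y. lle p q x y \<Longrightarrow> lle r s (trans_map p q r s x) (trans_map p q r s y)"
  proof -
    fix x y assume "lle p q x y"
    then obtain z where z: "lcong p q (padd x z) y" by (auto simp: lle_def)
    let ?w = "(fst (trans_map p q r s (padd x z)) - fst (trans_map p q r s x),
               snd (trans_map p q r s (padd x z)) - snd (trans_map p q r s x))"
    have "tau p r (fst x) \<le> tau p r (fst x + fst z)" "tau q s (snd x) \<le> tau q s (snd x + snd z)"
      using a by (auto intro: tau_mono)
    hence "padd (trans_map p q r s x) ?w = trans_map p q r s (padd x z)"
      by (simp add: padd_def trans_map_def)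
    with P1[OF z] show "lle r s (trans_map p q r s x) (trans_map p q r s y)"
      unfolding lle_def by metis
  qed
  have P3: "\<And>x. lle p q (trans_map r s p q (trans_map p q r s x)) x"
  proof -
    fix x
    let ?y = "trans_map r s p q (trans_map p q r s x)"
    have "fst ?y \<le> fst x" "snd ?y \<le> snd x" using a by (auto simp: trans_map_def tau_back)
    hence "padd ?y (fst x - fst ?y, snd x - snd ?y) = x" by (simp add: padd_def)
    then show "lle p q ?y x" unfolding lle_def by (metis lcong.refl)
  qed
  have P4: "p \<le> r \<and> q \<le> s \<longrightarrow> (\<forall>x. lcong p q (trans_map r s p q (trans_map p q r s x)) x)"
    using a by (auto simp: trans_map_def tau_back_eq lcong.refl)
  have P5: "2 \<le> p \<and> 2 \<le> q \<and> 2 \<le> r \<and> 2 \<le> s \<longrightarrow>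
         (\<forall>x. lcong r s (trans_map p q r s x) (0, 0) \<longleftrightarrow> lcong p q x (0, 0))"
  proof (intro impI allI)
    fix x :: "nat \<times> nat" assume h: "2 \<le> p \<and> 2 \<le> q \<and> 2 \<le> r \<and> 2 \<le> s"
    have z: "\<And>p q x. 0 < p \<Longrightarrow> 0 < q \<Longrightarrow> lcong p q x (0,0) \<longleftrightarrow> x = (0,0)"
    proof -
      fix p q :: nat and x :: "nat \<times> nat" assume "0 < p" "0 < q"
      moreover obtain m n where x: "x = (m, n)" by force
      moreover have "m mod p = 0 \<and> m div p = 0 \<longleftrightarrow> m = 0"
        by (metis div_0 div_mult_mod_eq mod_0 mult_0 add_0)
      ultimately show "lcong p q x (0,0) \<longleftrightarrow> x = (0,0)"
        by (auto simp add: lcong_iff nf_def)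
    qed
    show "lcong r s (trans_map p q r s x) (0, 0) \<longleftrightarrow> lcong p q x (0, 0)"
      using a h by (simp add: z trans_map_def tau_zero prod_eq_iff)
  qed
  show ?thesis using P1 P2 P3 P4 P5 by blast
qed

end
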